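(* Let $X$ be a metric space with integer valued metric. Then for every $f\in\mathrm{E}(X)$ and every integer $m\ge1$ there exists a function $f'\in\mathrm{E}'(X)$ with values in $\frac1m\mathbb{Z}$ such that $\|f-f'\|_\infty\le\frac1{2m}$.
   Context: $\Delta(X)=\{f\in\mathbb R^X: f(x)+f(y)\ge d(x,y)\ \forall x,y\in X\}$ with the pointwise order; $\mathrm{E}(X)$ is its set of minimal elements. For $f\colon X\to\mathbb R$, $A(f)$ is the set of unordered pairs $\{x,y\}$ ($x=y$ allowed) with $f(x)+f(y)=d(x,y)$, and $\mathrm{E}'(X)=\{f\in\Delta(X):\bigcup A(f)=X\}$ (a subset of $\mathrm{E}(X)$). $\|f-g\|_\infty=\sup_x|f(x)-g(x)|$. *)

theory Defs
  imports Complex_Main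
begin

definition metric_on :: "'a set \<Rightarrow> ('a \<Rightarrow> 'a \<Rightarrow> real) \<Rightarrow> bool" where
  "metric_on X d \<longleftrightarrow>
     (\<forall>x\<in>X. \<forall>y\<in>X. d x y = 0 \<longleftrightarrow> x = y) \<and>
     (\<forall>x\<in>X. \<forall>y\<in>X. d x y = d y x) \<and>
     (\<forall>x\<in>X. \<forall>y\<in>X. \<forall>z\<in>X. d x z \<le> d x y + d y z)"

definition integer_valued :: "'a set \<Rightarrow> ('a \<Rightarrow> 'a \<Rightarrow> real) \<Rightarrow> bool" where
  "integer_valued X d \<longleftrightarrow> (\<forall>x\<in>X. \<forall>y\<in>X. d x y \<in> \<int>)"

definition Delta :: "'a set \<Rightarrow> ('a \<Rightarrow> 'a \<Rightarrow> real) \<Rightarrow> ('a \<Rightarrow> real) set" where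
  "Delta X d = {f. \<forall>x\<in>X. \<forall>y\<in>X. f x + f y \<ge> d x y}"

definition E_set :: "'a set \<Rightarrow> ('a \<Rightarrow> 'a \<Rightarrow> real) \<Rightarrow> ('a \<Rightarrow> real) set" where
  "E_set X d = {f \<in> Delta X d. \<forall>g \<in> Delta X d.
      (\<forall>x\<in>X. g x \<le> f x) \<longrightarrow> (\<forall>x\<in>X. g x = f x)}"

definition Apairs :: "'a set \<Rightarrow> ('a \<Rightarrow> 'a \<Rightarrow> real) \<Rightarrow> ('a \<Rightarrow> real) \<Rightarrow> 'a set set" where
  "Apairs X d f = {{x, y} | x y. x \<in> X \<and> y \<in> X \<and> f x + f y = d x y}"

definition E_set' :: "'a set \<Rightarrow> ('a \<Rightarrow> 'a \<Rightarrow> real) \<Rightarrow> ('a \<Rightarrow> real) set" where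
  "E_set' X d = {f \<in> Delta X d. \<Union> (Apairs X d f) = X}"

end

theory Submission
  imports Defs
begin

lemma E_near:
  assumes md: "metric_on X d" and fE: "f \<in> E_set X d" and x0: "x0 \<in> X" and e: "e > 0"
  shows "\<exists>y\<in>X. f x0 + f y < d x0 y + e"
proof (rule ccontr)
  assume "\<not> ?thesis"
  hence H: "\<forall>y\<in>X. f x0 + f y \<ge> d x0 y + e" by (auto simp: not_less)
  have d0: "d x0 x0 = 0" using md x0 unfolding metric_on_def by auto
  have sym: "\<forall>x\<in>X. \<forall>y\<in>X. d x y = d y x" using md unfolding metric_on_def by auto
  have fD: "f \<in> Delta X d" and fmin: "\<forall>g \<in> Delta X d.
      (\<forall>x\<in>X. g x \<le> f x) \<longrightarrow> (\<forall>x\<in>X. g x = f x)" using fE unfolding E_set_def by auto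
  define g where "g = f(x0 := f x0 - e/2)"
  have "2 * f x0 \<ge> e" using H x0 d0 by force
  have gD: "g \<in> Delta X d"
    unfolding Delta_def
  proof (clarify)
    fix x y assume xy: "x \<in> X" "y \<in> X"
    show "d x y \<le> g x + g y"
    proof (cases "x = x0")
      case True
      then show ?thesis
      proof (cases "y = x0")
        case True
        then show ?thesis using \<open>x = x0\<close> d0 \<open>2 * f x0 \<ge> e\<close> by (simp add: g_def)
      next
        case False
        then show ?thesis using \<open>x = x0\<close> H xy e by (force simp: g_def)
      qed
    next
      case False
      then show ?thesis
      proof (cases "y = x0")
        case True
        have "f x0 + f x \<ge> d x0 x + e" using H xy by auto
        then show ?thesis using True False sym xy x0 e by (force simp: g_def)
      next
        case False
        then show ?thesis using \<open>x \<noteq> x0\<close> fD xy by (auto simp: g_def Delta_def)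
      qed
    qed
  qed
  have "\<forall>x\<in>X. g x \<le> f x" using e by (auto simp: g_def)
  hence "g x0 = f x0" using fmin gD x0 by blast
  thus False using e by (simp add: g_def)
qed

theorem proposition4p4:
  fixes X :: "'a set" and d :: "'a \<Rightarrow> 'a \<Rightarrow> real"
    and f :: "'a \<Rightarrow> real" and m :: int
  assumes "metric_on X d" and "integer_valued X d"
    and "f \<in> E_set X d" and "m \<ge> 1"
  shows "\<exists>f' \<in> E_set' X d. (\<forall>x\<in>X. of_int m * f' x \<in> \<int>) \<and>
           (\<forall>x\<in>X. \<bar>f x - f' x\<bar> \<le> 1 / (2 * of_int m))"
proof -
  note md = assms(1)
  have sym: "\<forall>x\<in>X. \<forall>y\<in>X. d x y = d y x" using md unfolding metric_on_def by auto
  have d0: "\<forall>x\<in>X. d x x = 0" using md unfolding metric_on_def by auto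
  have fD: "f \<in> Delta X d" using assms(3) unfolding E_set_def by auto
  define M where "M = real_of_int m"
  have M1: "M \<ge> 1" using assms(4) by (simp add: M_def)
  define F where "F x = M * f x" for x
  have dint: "\<forall>x\<in>X. \<forall>y\<in>X. \<exists>n::int. M * d x y = of_int n"
  proof (intro ballI)
    fix x y assume "x \<in> X" "y \<in> X"
    then obtain j where "d x y = of_int j" using assms(2) unfolding integer_valued_def by (auto elim!: Ints_cases)
    then show "\<exists>n::int. M * d x y = of_int n" by (intro exI[of _ "m*j"]) (simp add: M_def)
  qed
  define H where "H = {x\<in>X. \<exists>n::int. F x + 1/2 = of_int n}"
  define tight where "tight x y \<longleftrightarrow> f x + f y = d x y" for x y
  define A where "A = {I. I \<subseteq> H \<and> (\<forall>x\<in>I. \<forall>y\<in>I. \<not> tight x y)}"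
  have "\<exists>L\<in>A. \<forall>I\<in>A. L \<subseteq> I \<longrightarrow> I = L"
  proof (rule Zorn_Lemma, rule ballI)
    fix C assume C: "C \<in> chains A"
    show "\<Union>C \<in> A" unfolding A_def
    proof (safe)
      fix x I assume "x \<in> I" "I \<in> C" thus "x \<in> H" using chainsD2[OF C] by (auto simp: A_def)
    next
      fix x y I J assume "x \<in> I" "I \<in> C" "y \<in> J" "J \<in> C" "tight x y"
      thus False using chainsD[OF C \<open>I \<in> C\<close> \<open>J \<in> C\<close>] chainsD2[OF C] unfolding A_def by blast
    qed
  qed
  then obtain L where LA: "L \<in> A" and Lmax: "\<forall>I\<in>A. L \<subseteq> I \<longrightarrow> I = L" by blast
  have LH: "L \<subseteq> H" and Lind: "\<forall>x\<in>L. \<forall>y\<in>L. \<not> tight x y" using LA by (auto simp: A_def)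
  define k where "k x = (if x \<in> L then \<lfloor>F x + 1/2\<rfloor> - 1 else \<lfloor>F x + 1/2\<rfloor>)" for x
  define g where "g x = of_int (k x) / M" for x
  define e where "e x = of_int (k x) - F x" for x
  have eL: "e x = -1/2" if xL: "x \<in> L" for x
  proof -
    obtain n :: int where "F x + 1/2 = of_int n" using xL LH unfolding H_def by blast
    thus ?thesis using xL by (simp add: e_def k_def)
  qed
  have eH: "e x = 1/2" if xH: "x \<in> H" "x \<notin> L" for x
  proof -
    obtain n :: int where "F x + 1/2 = of_int n" using xH unfolding H_def by blast
    thus ?thesis using xH by (simp add: e_def k_def)
  qed
  have eN: "e x > -1/2 \<and> e x \<le> 1/2" if "x \<notin> L" for x
  proof -
    have "of_int \<lfloor>F x + 1/2\<rfloor> \<le> F x + 1/2" "F x + 1/2 < of_int \<lfloor>F x + 1/2\<rfloor> + 1" by linarith+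
    moreover have "e x = of_int \<lfloor>F x + 1/2\<rfloor> - F x" using that by (simp add: e_def k_def)
    ultimately show ?thesis by linarith
  qed
  have eB: "\<bar>e x\<bar> \<le> 1/2" for x
    using eN[of x] eL[of x] by (cases "x \<in> L") auto
  have gk: "M * g x = of_int (k x)" for x using M1 by (simp add: g_def)
  have ksum: "of_int (k x + k y) = M * (f x + f y) + e x + e y" for x y
    by (simp add: e_def F_def algebra_simps)
  have kD: "of_int (k x + k y) \<ge> M * d x y" if xy: "x \<in> X" "y \<in> X" for x y
  proof -
    obtain n where n: "M * d x y = of_int n" using dint xy by blast
    have fxy: "f x + f y \<ge> d x y" using fD xy by (auto simp: Delta_def)
    hence Mfxy: "M * (f x + f y) \<ge> M * d x y" using M1 by (simp add: mult_left_mono)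
    show ?thesis
    proof (cases "x \<in> L \<and> y \<in> L")
      case True
      obtain a :: int where a: "F x + 1/2 = of_int a" using True LH unfolding H_def by blast
      obtain b :: int where b: "F y + 1/2 = of_int b" using True LH unfolding H_def by blast
      have "f x + f y \<noteq> d x y" using Lind True by (auto simp: tight_def)
      hence "M * (f x + f y) \<noteq> M * d x y" using M1 by auto
      hence ne: "of_int (a + b - 1) \<noteq> (of_int n :: real)" using a b n by (simp add: F_def algebra_simps)
      have "of_int (a + b - 1) \<ge> (of_int n :: real)" using a b n Mfxy by (simp add: F_def algebra_simps)
      hence "a + b - 1 \<ge> n + 1" using ne by linarith
      hence "of_int (a + b - 1) \<ge> (of_int n :: real) + 1" by linarith
      thus ?thesis using ksum[of x y] eL True a b n by (simp add: F_def algebra_simps)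
    next
      case False
      hence "e x + e y > -1" using eN[of x] eN[of y] eB[of x] eB[of y] by (auto simp: abs_if split: if_splits)
      hence "of_int (k x + k y) > of_int n - (1::real)" using ksum[of x y] n Mfxy by linarith
      hence "k x + k y \<ge> n" by linarith
      thus ?thesis using n by linarith
    qed
  qed
  have gD: "g \<in> Delta X d" unfolding Delta_def
  proof (clarify)
    fix x y assume "x \<in> X" "y \<in> X"
    hence "M * d x y \<le> M * (g x + g y)" using kD gk by (simp add: distrib_left)
    thus "d x y \<le> g x + g y" using M1 by simp
  qed
  have tightg: "\<exists>y\<in>X. g x + g y = d x y" if x: "x \<in> X" for x
  proof -
    have "\<exists>y\<in>X. of_int (k x + k y) = M * d x y"
    proof (cases "x \<in> H \<and> x \<notin> L")
      case True
      have "L \<union> {x} \<in> A \<Longrightarrow> False" using Lmax True by auto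
      then obtain y where y: "y \<in> L \<union> {x}" "tight x y \<or> tight y x"
        using LA True unfolding A_def by auto
      have yX: "y \<in> X" using y LH x by (auto simp: H_def)
      have "y \<noteq> x"
      proof
        assume "y = x"
        hence "f x = 0" using y d0 x by (auto simp: tight_def)
        then obtain n :: int where "1/2 = (of_int n :: real)" using True by (auto simp: H_def F_def)
        hence "of_int (2*n) = (1::real)" by simp
        hence "2*n = 1" by (simp only: of_int_eq_1_iff)
        thus False by presburger
      qed
      hence yL: "y \<in> L" using y by auto
      have "f x + f y = d x y" using y sym x yX by (auto simp: tight_def)
      hence "of_int (k x + k y) = M * d x y" using ksum[of x y] eL[OF yL] eH[of x] True
        by (simp add: algebra_simps)
      thus ?thesis using yX by blast
    next
      case False
      have ex: "e x < 1/2"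
      proof (cases "x \<in> L")
        case True thus ?thesis using eL by simp
      next
        case False
        hence xH: "x \<notin> H" using \<open>\<not> (x \<in> H \<and> x \<notin> L)\<close> by blast
        have ee: "e x = of_int \<lfloor>F x + 1/2\<rfloor> - F x" using False by (simp add: e_def k_def)
        have "e x \<noteq> 1/2"
        proof
          assume "e x = 1/2"
          hence "F x + 1/2 = of_int \<lfloor>F x + 1/2\<rfloor>" using ee by simp
          thus False using xH x unfolding H_def by blast
        qed
        thus ?thesis using eN[OF False] by simp
      qed
      define del where "del = 1/2 - e x"
      have del: "del > 0" using ex by (simp add: del_def)
      obtain y where yX: "y \<in> X" and y: "f x + f y < d x y + del / M"
        using E_near[OF md assms(3) x, of "del/M"] del M1 by auto
      have "M * (f x + f y) < M * (d x y + del / M)" using mult_strict_left_mono[OF y, of M] M1 by simp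
      also have "\<dots> = M * d x y + del" using M1 by (simp add: distrib_left)
      finally have "M * (f x + f y) < M * d x y + del" .
      hence lt: "of_int (k x + k y) < M * d x y + 1" using ksum[of x y] eB[of y] del_def by (simp add: abs_le_iff)
      obtain n where n: "M * d x y = of_int n" using dint x yX by blast
      have "of_int (k x + k y) < (of_int (n + 1) :: real)" using lt n by simp
      hence "k x + k y < n + 1" by (simp only: of_int_less_iff)
      moreover have "of_int (k x + k y) \<ge> (of_int n :: real)" using kD[OF x yX] n by simp
      hence "k x + k y \<ge> n" by (simp only: of_int_le_iff)
      ultimately have "k x + k y = n" by linarith
      hence "of_int (k x + k y) = M * d x y" using n by simp
      thus ?thesis using yX by blast
    qed
    then obtain y where "y \<in> X" "of_int (k x + k y) = M * d x y" by blast
    hence "M * (g x + g y) = M * d x y" using gk by (simp add: distrib_left)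
    thus ?thesis using M1 \<open>y \<in> X\<close> by auto
  qed
  have gE: "g \<in> E_set' X d" unfolding E_set'_def
  proof (safe)
    show "g \<in> Delta X d" by (rule gD)
  next
    fix x P assume "x \<in> P" "P \<in> Apairs X d g" thus "x \<in> X" by (auto simp: Apairs_def)
  next
    fix x assume x: "x \<in> X"
    then obtain y where "y \<in> X" "g x + g y = d x y" using tightg by blast
    hence "{x, y} \<in> Apairs X d g" using x unfolding Apairs_def by blast
    thus "x \<in> \<Union> (Apairs X d g)" by blast
  qed
  moreover have "\<forall>x\<in>X. of_int m * g x \<in> \<int>" using gk by (simp add: M_def)
  moreover have "\<forall>x\<in>X. \<bar>f x - g x\<bar> \<le> 1 / (2 * of_int m)"
  proof
    fix x
    have "\<bar>M * (f x - g x)\<bar> \<le> 1/2" using eB[of x] gk[of x]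
      by (simp add: e_def F_def right_diff_distrib abs_minus_commute)
    hence "M * \<bar>f x - g x\<bar> \<le> 1/2" using M1 by (simp add: abs_mult)
    thus "\<bar>f x - g x\<bar> \<le> 1 / (2 * of_int m)" using M1 unfolding M_def[symmetric]
      by (simp add: field_simps)
  qed
  ultimately show ?thesis by blast
qed

end
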